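(* Let $\lambda$ be a partition with at most $n$ parts and $b=x_1\otimes\cdots\otimes x_n\in E_\lambda$. Let $Z_b$ be the set of $i\in\{1,\dots,n-1\}$ such that exactly one of $x_i,x_{i+1}$ is barred. Then $$\sum_{i\in Z_b}(n-i)\bigl(1-2H(x_i\otimes x_{i+1})\bigr)=\frac{n-|\lambda|}{2}.$$
   Context: Let $\mathcal{C}_n$ be the ordered alphabet $1<2<\cdots<n<\bar n<\overline{n-1}<\cdots<\bar1$; letters $k$ are unbarred, letters $\bar k$ barred; $\mathrm{wt}(k)=\varepsilon_k$, $\mathrm{wt}(\bar k)=-\varepsilon_k$ ($\varepsilon_k$ standard basis of $\mathbb{Z}^n$). $E_\lambda$ is the set of words $x_1\otimes\cdots\otimes x_n$ over $\mathcal{C}_n$ such that each partial sum $w_i=\sum_{j\le i}\mathrm{wt}(x_j)$ ($1\le i\le n$) is a partition (weakly decreasing, nonnegative) and $w_n=\lambda$. $|\lambda|=\sum\lambda_i$. For letters $x,y$, $H(x\otimes y)=1$ if $x\ge y$ and $0$ if $x<y$. *)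

theory Defs
  imports Complex_Main
begin

datatype letter = Unb nat | Bar nat

definition in_alphabet :: "nat \<Rightarrow> letter \<Rightarrow> bool" where
  "in_alphabet n x = (case x of Unb k \<Rightarrow> 1 \<le> k \<and> k \<le> n | Bar k \<Rightarrow> 1 \<le> k \<and> k \<le> n)"

definition barred :: "letter \<Rightarrow> bool" where
  "barred x = (case x of Unb _ \<Rightarrow> False | Bar _ \<Rightarrow> True)"

fun letter_less :: "letter \<Rightarrow> letter \<Rightarrow> bool" where
  "letter_less (Unb i) (Unb j) = (i < j)"
| "letter_less (Unb i) (Bar j) = True"
| "letter_less (Bar i) (Unb j) = False"
| "letter_less (Bar i) (Bar j) = (j < i)"

text \<open>Weight of a letter, as a vector indexed by 1..n.\<close>
fun wt :: "letter \<Rightarrow> nat \<Rightarrow> int" where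
  "wt (Unb k) j = (if j = k then 1 else 0)"
| "wt (Bar k) j = (if j = k then -1 else 0)"

definition psum :: "letter list \<Rightarrow> nat \<Rightarrow> nat \<Rightarrow> int" where
  "psum xs i j = (\<Sum>t<i. wt (xs ! t) j)"

definition is_partition :: "nat \<Rightarrow> (nat \<Rightarrow> int) \<Rightarrow> bool" where
  "is_partition n w = ((\<forall>j. 1 \<le> j \<and> j < n \<longrightarrow> w (Suc j) \<le> w j) \<and> (\<forall>j. 1 \<le> j \<and> j \<le> n \<longrightarrow> 0 \<le> w j))"

definition E :: "nat \<Rightarrow> (nat \<Rightarrow> int) \<Rightarrow> letter list set" where
  "E n lam = {xs. length xs = n \<and> (\<forall>x\<in>set xs. in_alphabet n x)
      \<and> (\<forall>i. 1 \<le> i \<and> i \<le> n \<longrightarrow> is_partition n (psum xs i))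
      \<and> (\<forall>j. 1 \<le> j \<and> j \<le> n \<longrightarrow> psum xs n j = lam j)}"

definition size_part :: "nat \<Rightarrow> (nat \<Rightarrow> int) \<Rightarrow> int" where
  "size_part n lam = (\<Sum>j=1..n. lam j)"

definition H :: "letter \<Rightarrow> letter \<Rightarrow> int" where
  "H x y = (if letter_less x y then 0 else 1)"

text \<open>Z_b, with x_i = xs ! (i - 1).\<close>
definition Zset :: "nat \<Rightarrow> letter list \<Rightarrow> nat set" where
  "Zset n xs = {i. 1 \<le> i \<and> i \<le> n - 1 \<and> barred (xs ! (i - 1)) \<noteq> barred (xs ! i)}"

end

theory Submission
  imports Defs
begin

lemma tele: "(\<Sum>i\<in>{1..<Suc n}. (b i - b (i-1)::int)) = b n - b 0"
  by (induction n) (auto simp: atLeastLessThanSuc)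

lemma abel: "(\<Sum>i\<in>{1..<n}. int (n - i) * (b i - b (i-1))) = (\<Sum>i<n. b i) - int n * b 0"
proof (induction n)
  case 0 then show ?case by simp
next
  case (Suc n)
  have "(\<Sum>i\<in>{1..<Suc n}. int (Suc n - i) * (b i - b (i-1)))
      = (\<Sum>i\<in>{1..<Suc n}. int (n - i) * (b i - b (i-1)) + (b i - b (i-1)))"
    by (rule sum.cong) (auto simp: algebra_simps of_nat_diff)
  also have "\<dots> = (\<Sum>i\<in>{1..<Suc n}. int (n - i) * (b i - b (i-1))) + (b n - b 0)"
    by (subst sum.distrib) (simp only: tele)
  also have "(\<Sum>i\<in>{1..<Suc n}. int (n - i) * (b i - b (i-1))) = (\<Sum>i\<in>{1..<n}. int (n - i) * (b i - b (i-1)))"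
    by (cases n) (auto simp: atLeastLessThanSuc)
  finally show ?case using Suc by (simp add: algebra_simps)
qed

definition bb :: "letter list \<Rightarrow> nat \<Rightarrow> int" where
  "bb xs i = (if barred (xs ! i) then 1 else 0)"

lemma term_eq:
  "(if barred (xs ! (i - 1)) \<noteq> barred (xs ! i) then int (n - i) * (1 - 2 * H (xs ! (i - 1)) (xs ! i)) else 0)
   = int (n - i) * (bb xs i - bb xs (i - 1))"
  by (cases "xs ! (i - 1)"; cases "xs ! i") (auto simp: barred_def H_def bb_def)

lemma Zsum:
  "(\<Sum>i\<in>Zset n xs. int (n - i) * (1 - 2 * H (xs ! (i - 1)) (xs ! i)))
   = (\<Sum>i\<in>{1..<n}. int (n - i) * (bb xs i - bb xs (i - 1)))"
proof -
  have Z: "Zset n xs = {i\<in>{1..<n}. barred (xs ! (i - 1)) \<noteq> barred (xs ! i)}"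
    unfolding Zset_def by auto
  have "(\<Sum>i\<in>{1..<n}. int (n - i) * (bb xs i - bb xs (i - 1)))
     = (\<Sum>i\<in>{1..<n}. if barred (xs ! (i - 1)) \<noteq> barred (xs ! i) then int (n - i) * (1 - 2 * H (xs ! (i - 1)) (xs ! i)) else 0)"
    by (rule sum.cong[OF refl]) (rule term_eq[symmetric])
  also have "\<dots> = (\<Sum>i\<in>Zset n xs. int (n - i) * (1 - 2 * H (xs ! (i - 1)) (xs ! i)))"
    unfolding Z by (rule sum.inter_filter[OF finite_atLeastLessThan, symmetric])
  finally show ?thesis by simp
qed

lemma wt_sum:
  assumes "in_alphabet n x"
  shows "(\<Sum>j=1..n. wt x j) = 1 - 2 * (if barred x then 1 else 0)"
  using assms by (cases x) (auto simp: in_alphabet_def barred_def)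

theorem mainTheorem11:
  fixes n :: nat and lam :: "nat \<Rightarrow> int" and xs :: "letter list"
  assumes "is_partition n lam"
    and "xs \<in> E n lam"
  shows "real_of_int (\<Sum>i\<in>Zset n xs. int (n - i) * (1 - 2 * H (xs ! (i - 1)) (xs ! i)))
           = (real n - real_of_int (size_part n lam)) / 2"
proof -
  have len: "length xs = n" and alph: "\<forall>x\<in>set xs. in_alphabet n x"
    and part: "\<forall>i. 1 \<le> i \<and> i \<le> n \<longrightarrow> is_partition n (psum xs i)"
    and fin: "\<forall>j. 1 \<le> j \<and> j \<le> n \<longrightarrow> psum xs n j = lam j"
    using assms(2) unfolding E_def by auto
  have sp: "size_part n lam = (\<Sum>t<n. \<Sum>j=1..n. wt (xs ! t) j)"
  proof -
    have "size_part n lam = (\<Sum>j=1..n. \<Sum>t<n. wt (xs ! t) j)"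
      unfolding size_part_def by (rule sum.cong[OF refl]) (use fin in \<open>auto simp: psum_def\<close>)
    also have "\<dots> = (\<Sum>t<n. \<Sum>j=1..n. wt (xs ! t) j)" by (rule sum.swap)
    finally show ?thesis .
  qed
  also have "\<dots> = (\<Sum>t<n. 1 - 2 * bb xs t)"
  proof (rule sum.cong[OF refl])
    fix t assume "t \<in> {..<n}"
    then have ia: "in_alphabet n (xs ! t)" using alph len by auto
    show "(\<Sum>j=1..n. wt (xs ! t) j) = 1 - 2 * bb xs t" using wt_sum[OF ia] by (simp add: bb_def)
  qed
  also have "\<dots> = int n - 2 * (\<Sum>t<n. bb xs t)"
    by (simp add: sum_subtractf sum_distrib_left)
  finally have sp2: "size_part n lam = int n - 2 * (\<Sum>t<n. bb xs t)" .
  have b0: "int n * bb xs 0 = 0"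
  proof (cases "n = 0")
    case False
    have p1: "is_partition n (psum xs 1)" using part False by auto
    have "xs ! 0 \<in> set xs" using False len by auto
    then have a0: "in_alphabet n (xs ! 0)" using alph by auto
    have "bb xs 0 = 0"
    proof (cases "xs ! 0")
      case (Bar k)
      then have "1 \<le> k \<and> k \<le> n" using a0 by (simp add: in_alphabet_def)
      then have "0 \<le> psum xs 1 k" using p1 unfolding is_partition_def by auto
      then show ?thesis using Bar by (simp add: psum_def)
    qed (simp add: bb_def barred_def)
    then show ?thesis by simp
  qed simp
  show ?thesis
    unfolding Zsum abel sp2 using b0 by simp
qed

end
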